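(* Let $\mathcal{G}_1(\mathbb{R}_{++})$ be the set of cumulative distribution functions of Borel probability measures on $\mathbb{R}$ supported in $\mathbb{R}_{++}$ (i.e. right-continuous non-decreasing $F:[0,\infty]\to[0,1]$ with $F(0)=0$, $F(\infty)=1$). Then \[ R_2=\inf_{F\in\mathcal{G}_1(\mathbb{R}_{++})}\ \sup_{x,y\in\mathbb{R}_{++}}\Big(1+y-\min\{1,1-\tfrac1x+y\}F(x)-yF(y)+\min\{1+\tfrac1x,1+y\}\max\{0,F(x)+F(y)-1\}\Big). \]
   Context: Scheduling on two machines with two tasks. A processing-time matrix is $T=(T_{ij})\in\mathbb{R}_{++}^{2\times 2}$. An allocation is $X\in\{0,1\}^{2\times2}$ with $X_{1j}+X_{2j}=1$; makespan $M(X,T)=\max_{i}\sum_j X_{ij}T_{ij}$; $M^*(T)=\min_X M(X,T)$. $\mathcal{P}_2$ is the set of Borel probability measures on $\mathbb{R}^2$ supported in $\mathbb{R}_{++}^2$. For $\mathbb{P}\in\mathcal{P}_2$, algorithm $\mathcal{A}^{\mathbb{P}}$ draws $(z_1,z_2)\sim\mathbb{P}$ and sends task $j$ to machine 1 iff $T_{1j}/T_{2j}<z_j$ (else to machine 2). $M(\mathbb{P},T)$ is the expected makespan, $R_2(\mathbb{P})=\sup_T M(\mathbb{P},T)/M^*(T)\in[1,\infty]$, and $R_2=\inf_{\mathbb{P}\in\mathcal{P}_2}R_2(\mathbb{P})$. *)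

theory Defs
  imports "HOL-Probability.Probability"
begin

(* Processing-time matrices: T :: nat => nat => real, only entries T i j with i,j in {1,2} matter. *)
definition pos_matrix :: "(nat \<Rightarrow> nat \<Rightarrow> real) \<Rightarrow> bool" where
  "pos_matrix T \<longleftrightarrow> (\<forall>i\<in>{1,2}. \<forall>j\<in>{1,2}. T i j > 0)"

(* An allocation X in {0,1}^{2x2} with X_1j + X_2j = 1 is determined by a pair of booleans
   (b1,b2): b_j = True iff task j goes to machine 1. *)
definition alloc_mat :: "bool \<times> bool \<Rightarrow> nat \<Rightarrow> nat \<Rightarrow> real" where
  "alloc_mat b i j = (let t = (if j = 1 then fst b else snd b) in
     if i = 1 then (if t then 1 else 0) else (if t then 0 else 1))"

definition makespan :: "(nat \<Rightarrow> nat \<Rightarrow> real) \<Rightarrow> (nat \<Rightarrow> nat \<Rightarrow> real) \<Rightarrow> real" where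
  "makespan X T = max (\<Sum>j\<in>{1,2}. X 1 j * T 1 j) (\<Sum>j\<in>{1,2}. X 2 j * T 2 j)"

definition opt_makespan :: "(nat \<Rightarrow> nat \<Rightarrow> real) \<Rightarrow> real" where
  "opt_makespan T = Min ((\<lambda>b. makespan (alloc_mat b) T) ` UNIV)"

definition P2 :: "(real \<times> real) measure set" where
  "P2 = {P. prob_space P \<and> sets P = sets borel \<and> emeasure P ({0<..} \<times> {0<..}) = 1}"

definition alg_alloc :: "(nat \<Rightarrow> nat \<Rightarrow> real) \<Rightarrow> real \<times> real \<Rightarrow> bool \<times> bool" where
  "alg_alloc T z = (T 1 1 / T 2 1 < fst z, T 1 2 / T 2 2 < snd z)"

definition exp_makespan :: "(real \<times> real) measure \<Rightarrow> (nat \<Rightarrow> nat \<Rightarrow> real) \<Rightarrow> real" where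
  "exp_makespan P T = (\<integral>z. makespan (alloc_mat (alg_alloc T z)) T \<partial>P)"

definition ratio2 :: "(real \<times> real) measure \<Rightarrow> ereal" where
  "ratio2 P = (SUP T\<in>{T. pos_matrix T}. ereal (exp_makespan P T / opt_makespan T))"

definition R2 :: ereal where
  "R2 = (INF P\<in>P2. ratio2 P)"

definition G1_pos :: "(real \<Rightarrow> real) set" where
  "G1_pos = {(\<lambda>x. measure \<mu> {..x}) | \<mu>. prob_space \<mu> \<and> sets \<mu> = sets (borel :: real measure)
               \<and> emeasure \<mu> {0<..} = 1}"

definition thm7_obj :: "(real \<Rightarrow> real) \<Rightarrow> real \<Rightarrow> real \<Rightarrow> real" where
  "thm7_obj F x y = 1 + y - min 1 (1 - 1/x + y) * F x - y * F y
     + min (1 + 1/x) (1 + y) * max 0 (F x + F y - 1)"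

end

theory Submission
  imports Defs
begin

definition Ew :: "real\<Rightarrow>real\<Rightarrow>real\<Rightarrow>real\<Rightarrow>real\<Rightarrow>real\<Rightarrow>real\<Rightarrow>real\<Rightarrow>real" where
  "Ew p11 p22 p12 p21 a b c d = p11*(a+b) + p22*(c+d) + p12*max a d + p21*max b c"

definition Opt4 :: "real\<Rightarrow>real\<Rightarrow>real\<Rightarrow>real\<Rightarrow>real" where
  "Opt4 a b c d = min (min (a+b) (c+d)) (min (max a d) (max b c))"

definition Mq :: "real \<Rightarrow> real \<Rightarrow> real" where "Mq q1 q2 = max 0 (q1+q2-1)"

definition Ec :: "real\<Rightarrow>real\<Rightarrow>real\<Rightarrow>real\<Rightarrow>real\<Rightarrow>real\<Rightarrow>real" where
  "Ec q1 q2 a b c d = Ew (1-q1-q2+Mq q1 q2) (Mq q1 q2) (q2 - Mq q1 q2) (q1 - Mq q1 q2) a b c d"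

lemma obj_Ec: "x > 0 \<Longrightarrow> thm7_obj F x y = Ec (F x) (F y) 1 y (1/x) 1"
  unfolding thm7_obj_def Ec_def Ew_def Mq_def
  by (auto simp: min_def max_def algebra_simps add_divide_distrib diff_divide_distrib)

lemma max_scale: "t \<ge> 0 \<Longrightarrow> max (t*a) (t*b) = t * max a (b::real)"
  by (simp add: max_mult_distrib_left)
lemma min_scale: "t \<ge> 0 \<Longrightarrow> min (t*a) (t*b) = t * min a (b::real)"
  by (simp add: min_mult_distrib_left)

lemma Ew_hom: "t \<ge> 0 \<Longrightarrow> Ew p11 p22 p12 p21 (t*a) (t*b) (t*c) (t*d) = t * Ew p11 p22 p12 p21 a b c d"
  unfolding Ew_def using max_scale[of t a d] max_scale[of t b c] by (simp add: algebra_simps)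
lemma Opt4_hom: "t \<ge> 0 \<Longrightarrow> Opt4 (t*a) (t*b) (t*c) (t*d) = t * Opt4 a b c d"
  unfolding Opt4_def by (simp add: max_scale min_scale flip: distrib_left)

lemma Ec_hom: "t \<ge> 0 \<Longrightarrow> Ec q1 q2 (t*a) (t*b) (t*c) (t*d) = t * Ec q1 q2 a b c d"
  unfolding Ec_def by (rule Ew_hom)

lemma Ec_swap: "Ec q1 q2 a b c d = Ec q2 q1 b a d c"
  unfolding Ec_def Ew_def Mq_def by (simp add: algebra_simps max.commute)
lemma Opt4_swap: "Opt4 a b c d = Opt4 b a d c"
  unfolding Opt4_def by (simp add: algebra_simps max.commute min.commute min.left_commute)

lemma max_add: "(x0 - y0)*(x1-y1) \<ge> 0 \<Longrightarrow> max (x0+x1) (y0+y1) = max x0 y0 + max x1 (y1::real)"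
  by (auto simp: max_def zero_le_mult_iff)

lemma Ew_add:
  assumes "(a0-d0)*(a1-d1) \<ge> 0" "(b0-c0)*(b1-c1) \<ge> 0"
  shows "Ew p11 p22 p12 p21 (a0+a1) (b0+b1) (c0+c1) (d0+d1) =
         Ew p11 p22 p12 p21 a0 b0 c0 d0 + Ew p11 p22 p12 p21 a1 b1 c1 d1"
  unfolding Ew_def using max_add[OF assms(1)] max_add[OF assms(2)] by (simp add: algebra_simps)

lemma min_add_ge: "min (x0+x1) (y0+y1) \<ge> min x0 y0 + min x1 (y1::real)"
  by (auto simp: min_def)

lemma Opt4_add:
  assumes "(a0-d0)*(a1-d1) \<ge> 0" "(b0-c0)*(b1-c1) \<ge> 0"
  shows "Opt4 (a0+a1) (b0+b1) (c0+c1) (d0+d1) \<ge> Opt4 a0 b0 c0 d0 + Opt4 a1 b1 c1 d1"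
proof -
  have e1: "max (a0+a1) (d0+d1) = max a0 d0 + max a1 d1" using max_add[OF assms(1)] .
  have e2: "max (b0+b1) (c0+c1) = max b0 c0 + max b1 c1" using max_add[OF assms(2)] .
  have s1: "a0 + a1 + (b0 + b1) = (a0+b0)+(a1+b1)" "c0 + c1 + (d0 + d1) = (c0+d0)+(c1+d1)" by simp_all
  have m1: "min ((a0+b0)+(a1+b1)) ((c0+d0)+(c1+d1)) \<ge> min (a0+b0) (c0+d0) + min (a1+b1) (c1+d1)"
    by (rule min_add_ge)
  have m2: "min (max a0 d0 + max a1 d1) (max b0 c0 + max b1 c1) \<ge> min (max a0 d0) (max b0 c0) + min (max a1 d1) (max b1 c1)"
    by (rule min_add_ge)
  have m3: "min (min (a0+b0) (c0+d0) + min (a1+b1) (c1+d1)) (min (max a0 d0) (max b0 c0) + min (max a1 d1) (max b1 c1))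
     \<ge> min (min (a0+b0) (c0+d0)) (min (max a0 d0) (max b0 c0)) + min (min (a1+b1) (c1+d1)) (min (max a1 d1) (max b1 c1))"
    by (rule min_add_ge)
  show ?thesis unfolding Opt4_def e1 e2 s1
    using m1 m2 m3 min.mono by (smt (verit))
qed

lemma combine:
  assumes "(a0-d0)*(a1-d1) \<ge> 0" "(b0-c0)*(b1-c1) \<ge> 0" "S \<ge> 0"
    and "Ec q1 q2 a0 b0 c0 d0 \<le> S * Opt4 a0 b0 c0 d0"
    and "Ec q1 q2 a1 b1 c1 d1 \<le> S * Opt4 a1 b1 c1 d1"
  shows "Ec q1 q2 (a0+a1) (b0+b1) (c0+c1) (d0+d1) \<le> S * Opt4 (a0+a1) (b0+b1) (c0+c1) (d0+d1)"
proof -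
  have "Ec q1 q2 (a0+a1) (b0+b1) (c0+c1) (d0+d1) = Ec q1 q2 a0 b0 c0 d0 + Ec q1 q2 a1 b1 c1 d1"
    unfolding Ec_def by (rule Ew_add[OF assms(1,2)])
  also have "\<dots> \<le> S * (Opt4 a0 b0 c0 d0 + Opt4 a1 b1 c1 d1)" using assms(4,5) by (simp add: distrib_left)
  also have "\<dots> \<le> S * Opt4 (a0+a1) (b0+b1) (c0+c1) (d0+d1)"
    using Opt4_add[OF assms(1,2)] assms(3) by (simp add: mult_left_mono)
  finally show ?thesis .
qed

lemma Ec_single: "Ec q1 q2 a 0 c 0 = (1-q1)*a + q1*c" if "a \<ge> 0" "c \<ge> 0"
  using that unfolding Ec_def Ew_def by (simp add: max_def algebra_simps)

lemma Mq_sym: "Mq q1 q2 = Mq q2 q1" unfolding Mq_def by (simp add: add.commute)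

lemma Ec_termwise:
  assumes q: "0 \<le> q1" "q1 \<le> 1" "0 \<le> q2" "q2 \<le> 1" and xy: "x > 1" "0 < y" "y < 1"
  shows "Ec q1 q2 1 y (1/x) 1 \<le> max y (1/x) * Ec q2 q1 1 x (1/y) 1"
proof -
  define M where "M = Mq q1 q2"
  define m where "m = max y (1/x)"
  have M2: "Mq q2 q1 = M" unfolding M_def by (rule Mq_sym)
  have p11: "0 \<le> 1-q1-q2+M" "0 \<le> M" "0 \<le> q2 - M" "0 \<le> q1 - M"
    using q unfolding M_def Mq_def by auto
  have m1: "m*(1+x) \<ge> 1+y"
  proof -
    have "m \<ge> y" "m*x \<ge> 1" using xy unfolding m_def by (auto simp: max_def field_simps)
    then show ?thesis by (simp add: algebra_simps)
  qed
  have m2: "m*(1/y+1) \<ge> 1/x+1"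
  proof -
    have "m \<ge> 1/x" "m/y \<ge> 1" using xy unfolding m_def by (auto simp: max_def field_simps)
    then show ?thesis by (simp add: algebra_simps)
  qed
  have m3: "m * 1 \<ge> max y (1/x)" unfolding m_def by simp
  have m4: "m * max x (1/y) \<ge> 1"
  proof -
    have "m*x \<ge> 1" using xy unfolding m_def by (auto simp: max_def field_simps)
    moreover have "m * max x (1/y) \<ge> m * x" using xy unfolding m_def
      by (intro mult_left_mono) auto
    ultimately show ?thesis by simp
  qed
  have "Ec q1 q2 1 y (1/x) 1 = (1-q1-q2+M)*(1+y) + M*(1/x+1) + (q2-M)*1 + (q1-M)*max y (1/x)"
    unfolding Ec_def Ew_def M_def by simp
  also have "\<dots> \<le> (1-q1-q2+M)*(m*(1+x)) + M*(m*(1/y+1)) + (q2-M)*(m * max x (1/y)) + (q1-M)*(m*1)"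
    using p11 m1 m2 m3 m4 by (intro add_mono mult_left_mono) auto
  also have "\<dots> = m * Ec q2 q1 1 x (1/y) 1"
    unfolding Ec_def Ew_def M2 by (simp add: algebra_simps)
  finally show ?thesis unfolding m_def .
qed

context
  fixes F :: "real \<Rightarrow> real" and S :: real
  assumes F0: "\<And>x. 0 \<le> F x" and F1: "\<And>x. F x \<le> 1"
    and Sobj: "\<And>x y. x>0 \<Longrightarrow> y>0 \<Longrightarrow> thm7_obj F x y \<le> S"
    and Fsmall: "\<And>e. e>0 \<Longrightarrow> \<exists>x>0. F x < e"
begin

lemma obj_lb1: "x>0 \<Longrightarrow> y>0 \<Longrightarrow> thm7_obj F x y \<ge> 1 - (1-1/x)*F x - y"
proof -
  assume x: "x>0" and y: "y>0"
  have a: "min 1 (1-1/x+y) * F x \<le> (1-1/x+y) * F x" using F0[of x] by (intro mult_right_mono) auto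
  have b: "y * F y \<le> y" using F1[of y] y by (simp add: mult_left_le)
  have c: "0 \<le> min (1 + 1/x) (1 + y) * max 0 (F x + F y - 1)" using x y by (intro mult_nonneg_nonneg) auto
  have d: "y * F x \<le> y" using F1[of x] y by (simp add: mult_left_le)
  show ?thesis unfolding thm7_obj_def using a b c d by (simp add: algebra_simps)
qed

lemma obj_lb2: "x>0 \<Longrightarrow> y>0 \<Longrightarrow> thm7_obj F x y \<ge> 1 + y - F x - y * F y"
proof -
  assume x: "x>0" and y: "y>0"
  have a: "min 1 (1-1/x+y) * F x \<le> 1 * F x" using F0[of x] by (intro mult_right_mono) auto
  have c: "0 \<le> min (1 + 1/x) (1 + y) * max 0 (F x + F y - 1)" using x y by (intro mult_nonneg_nonneg) auto
  show ?thesis unfolding thm7_obj_def using a c by (simp add: algebra_simps)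
qed

lemma S_single: assumes r: "r>0" shows "(1 - F r)*r + F r \<le> S * min r 1"
proof (cases "r \<le> 1")
  case True
  define A where "A = 1 - (1-1/r)*F r"
  have "A \<le> S"
  proof (rule ccontr)
    assume "\<not> A \<le> S"
    then have "(A - S)/2 > 0" by simp
    from obj_lb1[OF r this] Sobj[OF r this] have "A - (A-S)/2 \<le> S" unfolding A_def by linarith
    then have "A \<le> S" by (simp add: field_simps)
    then show False using \<open>\<not> A \<le> S\<close> by simp
  qed
  then have "r*A \<le> r*S" using r by simp
  moreover have "r*A = (1 - F r)*r + F r" unfolding A_def using r by (simp add: field_simps)
  ultimately show ?thesis using True by (simp add: min_def mult.commute)
next
  case False
  have "(1 - F r)*r + F r \<le> S + e" if e: "e>0" for e
  proof -
    obtain x where x: "x>0" "F x < e" using Fsmall[OF e] by blast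
    from obj_lb2[OF x(1) r] Sobj[OF x(1) r] have "1 + r - F x - r*F r \<le> S" by simp
    then show ?thesis using x F1[of r] by (simp add: algebra_simps)
  qed
  then have "(1 - F r)*r + F r \<le> S" by (rule field_le_epsilon)
  then show ?thesis using False by simp
qed

lemma S_ge1: "S \<ge> 1"
  using S_single[of 1] by simp

lemma specA: assumes x: "x>0" and y: "y>0"
  shows "Ec (F x) (F y) 1 y (1/x) 1 \<le> S * Opt4 1 y (1/x) 1"
proof (cases "max y (1/x) \<ge> 1")
  case True
  have "1/x > 0" using x by simp
  then have h1: "min (1+y) (1/x+1) \<ge> 1" using y by simp
  have h2: "min (max 1 1) (max y (1/x)) = 1" using True by simp
  have "Opt4 1 y (1/x) 1 = 1" unfolding Opt4_def h2 using h1 by simp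
  then show ?thesis using Sobj[OF x y] obj_Ec[OF x, of F y] by simp
next
  case False
  then have y1: "y < 1" and "1/x < 1" by auto
  then have x1: "x > 1" using x by (simp add: divide_less_eq)
  have "1/x > 0" using x by simp
  then have h1: "min (1+y) (1/x+1) \<ge> 1" using y by simp
  have h2: "min (max 1 1) (max y (1/x)) = max y (1/x)" using False by simp
  have h3: "max y (1/x) \<le> min (1+y) (1/x+1)" using h1 False by linarith
  have o: "Opt4 1 y (1/x) 1 = max y (1/x)" unfolding Opt4_def h2 using h3 by (rule min.absorb2)
  have "Ec (F x) (F y) 1 y (1/x) 1 \<le> max y (1/x) * Ec (F y) (F x) 1 x (1/y) 1"
    by (rule Ec_termwise[OF F0 F1 F0 F1 x1 y y1])
  also have "\<dots> \<le> max y (1/x) * S"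
    using Sobj[OF y x] obj_Ec[OF y, of F x] y by (intro mult_left_mono) auto
  finally show ?thesis using o by (simp add: mult.commute)
qed

lemma specA_gen: assumes "a>0" "b>0" "c>0"
  shows "Ec (F (a/c)) (F (b/a)) a b c a \<le> S * Opt4 a b c a"
proof -
  have x: "a/c > 0" and y: "b/a > 0" using assms by auto
  have e: "a = a*1" "b = a*(b/a)" "c = a*(1/(a/c))" using assms by auto
  have "Ec (F (a/c)) (F (b/a)) (a*1) (a*(b/a)) (a*(1/(a/c))) (a*1) \<le> S * Opt4 (a*1) (a*(b/a)) (a*(1/(a/c))) (a*1)"
    unfolding Ec_hom[OF less_imp_le[OF assms(1)]] Opt4_hom[OF less_imp_le[OF assms(1)]]
    using specA[OF x y] assms(1) mult_left_mono[OF specA[OF x y], of a]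
    by (simp add: algebra_simps)
  then show ?thesis using assms by simp
qed

lemma single_gen: assumes "a>0" "c>0" "t\<ge>0"
  shows "Ec (F (a/c)) q2 (t*a) 0 (t*c) 0 \<le> S * Opt4 (t*a) 0 (t*c) 0"
proof -
  have r: "a/c > 0" using assms by auto
  have m1: "max (t*a) 0 = t*a" "max 0 (t*c) = t*c" using assms by auto
  have m2: "min a c = c * min (a/c) 1" using assms by (simp add: min_mult_distrib_left)
  have o: "Opt4 (t*a) 0 (t*c) 0 = t * (c * min (a/c) 1)"
    unfolding Opt4_def m1 m2[symmetric] using min_scale[OF assms(3), of a c] by simp
  have "Ec (F (a/c)) q2 (t*a) 0 (t*c) 0 = t * (c * ((1 - F (a/c))*(a/c) + F (a/c)))"
    using assms by (simp add: Ec_single field_simps)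
  also have "\<dots> \<le> t * (c * (S * min (a/c) 1))"
    using S_single[OF r] assms by (intro mult_left_mono) auto
  finally show ?thesis using o by (simp add: algebra_simps)
qed

lemma case1: assumes pos: "a>0" "b>0" "c>0" "d>0" and h: "d \<le> a" "b \<le> c"
  shows "Ec (F (a/c)) (F (b/d)) a b c d \<le> S * Opt4 a b c d"
proof -
  define l where "l = max (d/a) (b/c)"
  have "d/a > 0" using pos by simp
  then have l0: "l > 0" unfolding l_def by (simp add: less_max_iff_disj)
  have l1: "l \<le> 1" using pos h unfolding l_def by (auto simp: field_simps)
  have la: "l*a \<ge> d" and lc: "b \<le> l*c" using pos unfolding l_def by (auto simp: max_def field_simps)
  have T0: "Ec (F (a/c)) (F (b/d)) (l*a) b (l*c) d \<le> S * Opt4 (l*a) b (l*c) d"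
  proof (cases "d/a \<ge> b/c")
    case True
    then have le: "l = d/a" unfolding l_def by simp
    have "l*a = d" "l*c = d*c/a" using pos unfolding le by auto
    moreover have "d/(d*c/a) = a/c" using pos by (simp add: field_simps)
    moreover have "d*c/a > 0" using pos by simp
    ultimately show ?thesis using specA_gen[of d b "d*c/a"] pos by simp
  next
    case False
    then have le: "l = b/c" unfolding l_def by simp
    have e: "l*a = a*b/c" "l*c = b" using pos unfolding le by auto
    have r: "(a*b/c)/b = a/c" using pos by (simp add: field_simps)
    have p: "a*b/c > 0" using pos by simp
    have "Ec (F (b/d)) (F ((a*b/c)/b)) b (a*b/c) d b \<le> S * Opt4 b (a*b/c) d b"
      by (rule specA_gen[OF pos(2) p pos(4)])
    then show ?thesis unfolding e r using Ec_swap Opt4_swap by metis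
  qed
  have T1: "Ec (F (a/c)) (F (b/d)) ((1-l)*a) 0 ((1-l)*c) 0 \<le> S * Opt4 ((1-l)*a) 0 ((1-l)*c) 0"
    using single_gen[OF pos(1) pos(3)] l1 by simp
  have s1: "(l*a - d) * ((1-l)*a - 0) \<ge> 0" using la l1 pos by simp
  have s2: "(b - l*c) * (0 - (1-l)*c) \<ge> 0" using lc l1 pos by (intro mult_nonpos_nonpos) auto
  have "Ec (F (a/c)) (F (b/d)) (l*a + (1-l)*a) (b+0) (l*c + (1-l)*c) (d+0) \<le> S * Opt4 (l*a + (1-l)*a) (b+0) (l*c + (1-l)*c) (d+0)"
    by (rule combine[OF s1 s2 _ T0 T1]) (use S_ge1 in simp)
  then show ?thesis by (simp add: algebra_simps)
qed

lemma case2: assumes pos: "a>0" "b>0" "c>0" "d>0" and h: "a \<le> d" "c \<le> b"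
  shows "Ec (F (a/c)) (F (b/d)) a b c d \<le> S * Opt4 a b c d"
  using case1[of b a d c] pos h Ec_swap Opt4_swap by metis

lemma case3: assumes pos: "a>0" "b>0" "c>0" "d>0" and h: "(d < a \<and> c < b) \<or> (a < d \<and> b < c)"
  shows "Ec (F (a/c)) (F (b/d)) a b c d \<le> S * Opt4 a b c d"
proof -
  define sw where "sw = c*d/b"
  have sw0: "sw > 0" using pos unfolding sw_def by simp
  have "c*d < b*a \<or> b*a < c*d"
  proof (cases "d < a \<and> c < b")
    case True then show ?thesis using pos by (metis mult_strict_mono less_imp_le mult.commute)
  next
    case False then have "a < d \<and> b < c" using h by blast
    then show ?thesis using pos by (metis mult_strict_mono less_imp_le mult.commute)
  qed
  have sd: "(d < a \<and> sw < d) \<or> (a < d \<and> d < sw)"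
    using h pos unfolding sw_def by (auto simp: field_simps)
  then have sne: "a \<noteq> sw" by auto
  define al where "al = (d - sw)/(a - sw)"
  have al0: "al > 0" and al1: "al < 1" using sd unfolding al_def by (auto simp: field_simps)
  have "al*(a - sw) = d - sw" using sne unfolding al_def by simp
  then have ald: "al*a + (1-al)* sw = d" by (simp add: algebra_simps)
  have alb: "al*((b/d)*a) + (1-al)*c = b"
  proof -
    have "al*((b/d)*a) + (1-al)*c = (b/d)*(al*a + (1-al)* sw)" using pos unfolding sw_def by (simp add: field_simps)
    then show ?thesis unfolding ald using pos by simp
  qed
  have p1: "al*a > 0" "al*((b/d)*a) > 0" "al*c > 0" using pos al0 by auto
  have T0: "Ec (F (a/c)) (F (b/d)) (al*a) (al*((b/d)*a)) (al*c) (al*a) \<le> S * Opt4 (al*a) (al*((b/d)*a)) (al*c) (al*a)"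
  proof -
    have "(al*a)/(al*c) = a/c" "(al*((b/d)*a))/(al*a) = b/d" using pos al0 by auto
    then show ?thesis using specA_gen[OF p1] by simp
  qed
  have p2: "(1-al)*c > 0" "(1-al)*a > 0" "(1-al)* sw > 0" using pos al1 sw0 by auto
  have T1: "Ec (F (a/c)) (F (b/d)) ((1-al)*a) ((1-al)*c) ((1-al)*c) ((1-al)* sw) \<le> S * Opt4 ((1-al)*a) ((1-al)*c) ((1-al)*c) ((1-al)* sw)"
  proof -
    have r: "((1-al)*c)/((1-al)* sw) = b/d" "((1-al)*a)/((1-al)*c) = a/c" using pos al1 unfolding sw_def by auto
    have "Ec (F (((1-al)*c)/((1-al)* sw))) (F (((1-al)*a)/((1-al)*c))) ((1-al)*c) ((1-al)*a) ((1-al)* sw) ((1-al)*c)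
       \<le> S * Opt4 ((1-al)*c) ((1-al)*a) ((1-al)* sw) ((1-al)*c)"
      by (rule specA_gen[OF p2])
    then show ?thesis unfolding r using Ec_swap Opt4_swap by metis
  qed
  have s1: "(al*a - al*a) * ((1-al)*a - (1-al)* sw) \<ge> 0" by simp
  have s2: "(al*((b/d)*a) - al*c) * ((1-al)*c - (1-al)*c) \<ge> 0" by simp
  have "Ec (F (a/c)) (F (b/d)) (al*a + (1-al)*a) (al*((b/d)*a) + (1-al)*c) (al*c + (1-al)*c) (al*a + (1-al)* sw)
     \<le> S * Opt4 (al*a + (1-al)*a) (al*((b/d)*a) + (1-al)*c) (al*c + (1-al)*c) (al*a + (1-al)* sw)"
    by (rule combine[OF s1 s2 _ T0 T1]) (use S_ge1 in simp)
  moreover have "al*a + (1-al)*a = a" "al*c + (1-al)*c = c" by (simp_all add: algebra_simps)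
  ultimately show ?thesis unfolding ald alb by simp
qed

lemma main_bound: assumes pos: "a>0" "b>0" "c>0" "d>0"
  shows "Ec (F (a/c)) (F (b/d)) a b c d \<le> S * Opt4 a b c d"
proof -
  have "(d \<le> a \<and> b \<le> c) \<or> (a \<le> d \<and> c \<le> b) \<or> (d < a \<and> c < b) \<or> (a < d \<and> b < c)" by linarith
  then show ?thesis using case1[OF pos] case2[OF pos] case3[OF pos] by blast
qed

end


definition Eg :: "real\<Rightarrow>real\<Rightarrow>real\<Rightarrow>real\<Rightarrow>real\<Rightarrow>real\<Rightarrow>real\<Rightarrow>real" where
  "Eg q1 q2 q12 a b c d = (a+b) + q1*(max b c - (a+b)) + q2*(max a d - (a+b))
      + q12*(c+d - max b c - max a d + (a+b))"

lemma Ec_Eg: "Ec q1 q2 a b c d = Eg q1 q2 (Mq q1 q2) a b c d"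
  unfolding Ec_def Ew_def Eg_def by (simp add: algebra_simps)

definition cst :: "(nat \<Rightarrow> nat \<Rightarrow> real) \<Rightarrow> bool \<Rightarrow> bool \<Rightarrow> real" where
  "cst T x1 x2 = max ((if x1 then T 1 1 else 0) + (if x2 then T 1 2 else 0))
                     ((if x1 then 0 else T 2 1) + (if x2 then 0 else T 2 2))"

lemma makespan_cst: "makespan (alloc_mat (x1,x2)) T = cst T x1 x2"
  unfolding makespan_def alloc_mat_def cst_def by (simp add: Let_def)

lemma cst_vals: assumes "pos_matrix T"
  shows "cst T True True = T 1 1 + T 1 2" "cst T False False = T 2 1 + T 2 2"
    "cst T True False = max (T 1 1) (T 2 2)" "cst T False True = max (T 1 2) (T 2 1)"
  using assms unfolding cst_def pos_matrix_def by (auto simp: max_def)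

lemma opt_Opt4: assumes "pos_matrix T"
  shows "opt_makespan T = Opt4 (T 1 1) (T 1 2) (T 2 1) (T 2 2)"
proof -
  have U: "(UNIV :: (bool\<times>bool) set) = {(True,True),(False,False),(True,False),(False,True)}"
    by (auto simp: UNIV_bool)
  show ?thesis unfolding opt_makespan_def U
    using cst_vals[OF assms] by (simp add: makespan_cst Opt4_def min.assoc)
qed

lemma meas_fst[measurable]: "{z::real\<times>real. fst z \<le> r} \<in> sets borel"
  by (intro borel_closed closed_Collect_le continuous_intros)
lemma meas_snd[measurable]: "{z::real\<times>real. snd z \<le> r} \<in> sets borel"
  by (intro borel_closed closed_Collect_le continuous_intros)
lemma meas_both[measurable]: "{z::real\<times>real. fst z \<le> r1 \<and> snd z \<le> r2} \<in> sets borel"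
  by (intro borel_closed closed_Collect_conj closed_Collect_le continuous_intros)

lemma exp_formula:
  assumes P: "prob_space P" "sets P = sets borel" and T: "pos_matrix T"
  defines "r1 \<equiv> T 1 1 / T 2 1" and "r2 \<equiv> T 1 2 / T 2 2"
  shows "exp_makespan P T = Eg (measure P {z. fst z \<le> r1}) (measure P {z. snd z \<le> r2})
           (measure P {z. fst z \<le> r1 \<and> snd z \<le> r2}) (T 1 1) (T 1 2) (T 2 1) (T 2 2)"
proof -
  interpret prob_space P by fact
  have sp: "space P = UNIV" using sets_eq_imp_space_eq[OF P(2)] by simp
  define A where "A = {z::real\<times>real. fst z \<le> r1}"
  define B where "B = {z::real\<times>real. snd z \<le> r2}"
  define C where "C = {z::real\<times>real. fst z \<le> r1 \<and> snd z \<le> r2}"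
  have AB: "A \<in> sets P" "B \<in> sets P" "C \<in> sets P" unfolding A_def B_def C_def P(2) by (rule meas_fst meas_snd meas_both)+
  define a where "a = T 1 1" define b where "b = T 1 2" define c where "c = T 2 1" define d where "d = T 2 2"
  have cv: "cst T True True = a+b" "cst T False False = c+d" "cst T True False = max a d" "cst T False True = max b c"
    using cst_vals[OF T] unfolding a_def b_def c_def d_def by auto
  have pt: "makespan (alloc_mat (alg_alloc T z)) T =
     (a+b) + (max b c - (a+b)) * indicator A z + (max a d - (a+b)) * indicator B z
       + (c+d - max b c - max a d + (a+b)) * indicator C z" for z
    unfolding alg_alloc_def makespan_cst A_def B_def C_def r1_def r2_def
    by (cases "T 1 1 / T 2 1 < fst z"; cases "T 1 2 / T 2 2 < snd z") (auto simp: cv indicator_def)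
  have int: "integrable P (indicator X :: real\<times>real \<Rightarrow> real)" if "X \<in> sets P" for X
    using that by (intro integrable_real_indicator) (simp_all add: less_top[symmetric])
  have "exp_makespan P T = (\<integral>z. (a+b) + (max b c - (a+b)) * indicator A z + (max a d - (a+b)) * indicator B z
       + (c+d - max b c - max a d + (a+b)) * indicator C z \<partial>P)"
    unfolding exp_makespan_def pt ..
  also have "\<dots> = (a+b) + (max b c - (a+b)) * measure P A + (max a d - (a+b)) * measure P B
       + (c+d - max b c - max a d + (a+b)) * measure P C"
    using int[OF AB(1)] int[OF AB(2)] int[OF AB(3)] AB sp prob_space
    by (simp add: integral_add integral_mult_right_zero)
  finally show ?thesis unfolding Eg_def A_def B_def C_def a_def b_def c_def d_def by (simp add: algebra_simps)
qed


definition cdfp :: "(real \<Rightarrow> real) \<Rightarrow> bool" where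
  "cdfp F \<longleftrightarrow> (\<forall>x y. x \<le> y \<longrightarrow> F x \<le> F y) \<and> (\<forall>a. continuous (at_right a) F)
      \<and> (\<forall>x\<le>0. F x = 0) \<and> (F \<longlongrightarrow> 1) at_top"

lemma G1_elim: assumes "F \<in> G1_pos" shows "cdfp F"
proof -
  obtain \<mu> where F: "F = (\<lambda>x. measure \<mu> {..x})" and p: "prob_space \<mu>" "sets \<mu> = sets (borel::real measure)"
    and e: "emeasure \<mu> {0<..} = 1" using assms unfolding G1_pos_def by blast
  have rd: "real_distribution \<mu>" unfolding real_distribution_def real_distribution_axioms_def using p by simp
  interpret real_distribution \<mu> by (rule rd)
  have Fc: "F = cdf \<mu>" unfolding F cdf_def ..
  have s0: "{0<..} \<in> sets \<mu>" by simp
  have sp: "space \<mu> - {0<..} = {..0::real}" by auto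
  have "emeasure \<mu> (space \<mu> - {0<..}) = emeasure \<mu> (space \<mu>) - emeasure \<mu> {0<..}"
    by (rule emeasure_compl[OF s0]) simp
  then have "emeasure \<mu> {..0} = 0" unfolding sp using e emeasure_space_1 by simp
  then have z: "measure \<mu> {..0} = 0" by (simp add: measure_def)
  have Fz: "F x = 0" if "x \<le> 0" for x
  proof -
    have "measure \<mu> {..x} \<le> measure \<mu> {..0}" using that by (intro finite_measure_mono) auto
    moreover have "measure \<mu> {..x} \<ge> 0" by simp
    ultimately show ?thesis unfolding F using z by simp
  qed
  have "\<forall>x y. x \<le> y \<longrightarrow> F x \<le> F y" unfolding Fc using cdf_nondecreasing by blast
  moreover have "\<forall>a. continuous (at_right a) F" unfolding Fc using cdf_is_right_cont by blast
  moreover have "(F \<longlongrightarrow> 1) at_top" unfolding Fc by (rule cdf_lim_at_top_prob)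
  ultimately show ?thesis unfolding cdfp_def using Fz by blast
qed

lemma cdfp_01: assumes "cdfp F" shows "0 \<le> F x" "F x \<le> 1"
proof -
  have m: "\<And>x y. x \<le> y \<Longrightarrow> F x \<le> F y" and z: "\<And>x. x \<le> 0 \<Longrightarrow> F x = 0" and l: "(F \<longlongrightarrow> 1) at_top"
    using assms unfolding cdfp_def by auto
  show "0 \<le> F x" using m[of "min x 0" x] z[of "min x 0"] by simp
  show "F x \<le> 1"
    by (rule tendsto_lowerbound[OF l]) (auto simp: eventually_at_top_linorder intro!: exI[of _ x] m)
qed

lemma G1_intro: assumes "cdfp F" shows "F \<in> G1_pos"
proof -
  have m: "\<And>x y. x \<le> y \<Longrightarrow> F x \<le> F y" and rc: "\<And>a. continuous (at_right a) F"
    and z: "\<And>x. x \<le> 0 \<Longrightarrow> F x = 0" and l: "(F \<longlongrightarrow> 1) at_top"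
    using assms unfolding cdfp_def by auto
  have lb: "(F \<longlongrightarrow> 0) at_bot"
  proof -
    have "eventually (\<lambda>x. F x = 0) at_bot" unfolding eventually_at_bot_linorder using z by blast
    then show ?thesis by (rule tendsto_eventually)
  qed
  define \<mu> where "\<mu> = interval_measure F"
  have rd: "real_distribution \<mu>" unfolding \<mu>_def by (rule real_distribution_interval_measure[OF m rc lb l])
  interpret real_distribution \<mu> by (rule rd)
  have Fm: "F = (\<lambda>x. measure \<mu> {..x})" unfolding \<mu>_def using measure_interval_measure_Iic[OF m rc lb] by presburger
  have e0: "emeasure \<mu> {..0} = 0" unfolding \<mu>_def using emeasure_interval_measure_Iic[OF m rc lb, of 0] z[of 0] by simp
  have s0: "{..0} \<in> sets \<mu>" by simp
  have sp: "space \<mu> - {..0} = ({0<..}::real set)" by auto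
  have "emeasure \<mu> (space \<mu> - {..0}) = emeasure \<mu> (space \<mu>) - emeasure \<mu> {..0}"
    by (rule emeasure_compl[OF s0]) simp
  then have "emeasure \<mu> {0<..} = 1" unfolding sp using e0 emeasure_space_1 by simp
  moreover have "prob_space \<mu>" "sets \<mu> = sets borel" by (rule prob_space_axioms) simp
  ultimately show ?thesis unfolding G1_pos_def using Fm by blast
qed

lemma cdfp_small: assumes "cdfp F" and e: "e > 0" shows "\<exists>x>0. F x < e"
proof -
  have rc: "continuous (at_right 0) F" and z: "F 0 = 0" using assms unfolding cdfp_def by auto
  then have "(F \<longlongrightarrow> 0) (at_right 0)" unfolding continuous_within by simp
  then have "eventually (\<lambda>x. F x < e) (at_right 0)" using e by (rule order_tendstoD)
  then obtain b where b: "b > 0" "\<And>y. y > 0 \<Longrightarrow> y < b \<Longrightarrow> F y < e"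
    unfolding eventually_at_right_field by auto
  show ?thesis using b(1) b(2)[of "b/2"] by (intro exI[of _ "b/2"]) auto
qed

definition Qf :: "(real \<Rightarrow> real) \<Rightarrow> real \<Rightarrow> real" where
  "Qf F u = (if 0 < u \<and> u < 1 then Inf {x. u \<le> F x} else 1)"

context
  fixes F :: "real \<Rightarrow> real"
  assumes cF: "cdfp F"
begin

lemma Fm: "x \<le> y \<Longrightarrow> F x \<le> F y" and Frc: "continuous (at_right a) F"
  and Fz: "x \<le> 0 \<Longrightarrow> F x = 0" and Flim: "(F \<longlongrightarrow> 1) at_top"
  using cF unfolding cdfp_def by auto

lemma Sne: assumes "0 < u" "u < 1" shows "{x. u \<le> F x} \<noteq> {}" "bdd_below {x. u \<le> F x}"
proof -
  have "eventually (\<lambda>x. F x > u) at_top" using Flim assms(2) by (rule order_tendstoD)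
  then obtain x where "F x > u" by (auto simp: eventually_at_top_linorder)
  then have "x \<in> {x. u \<le> F x}" by simp
  then show "{x. u \<le> F x} \<noteq> {}" by blast
  show "bdd_below {x. u \<le> F x}"
  proof (rule bdd_belowI)
    fix x assume "x \<in> {x. u \<le> F x}"
    then show "0 \<le> x" using Fz[of x] assms by (cases "x \<le> 0") auto
  qed
qed

lemma F_Q: assumes "0 < u" "u < 1" shows "u \<le> F (Qf F u)"
proof -
  define q where "q = Inf {x. u \<le> F x}"
  have Qq: "Qf F u = q" unfolding Qf_def q_def using assms by simp
  have ev: "\<forall>y>q. u \<le> F y"
  proof (intro allI impI)
    fix y assume "y > q"
    then obtain s where "s \<in> {x. u \<le> F x}" "s < y" unfolding q_def using cInf_less_iff[OF Sne[OF assms]] by blast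
    then show "u \<le> F y" using Fm[of s y] by auto
  qed
  have "(F \<longlongrightarrow> F q) (at_right q)" using Frc[of q] unfolding continuous_within .
  then have "u \<le> F q"
  proof (rule tendsto_lowerbound)
    show "\<forall>\<^sub>F x in at_right q. u \<le> F x"
      using eventually_at_right_less[of q] by (rule eventually_mono) (use ev in auto)
  qed simp
  then show ?thesis unfolding Qq .
qed

lemma Q_le: assumes "0 < u" "u < 1" shows "Qf F u \<le> r \<longleftrightarrow> u \<le> F r"
proof
  assume "Qf F u \<le> r" then show "u \<le> F r" using F_Q[OF assms] Fm by (meson order_trans)
next
  assume "u \<le> F r"
  then show "Qf F u \<le> r" unfolding Qf_def using assms Sne[OF assms] by (auto intro: cInf_lower)
qed

lemma Q_pos: assumes "0 < u" "u < 1" shows "Qf F u > 0"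
proof (rule ccontr)
  assume "\<not> Qf F u > 0"
  then have "F (Qf F u) = 0" using Fz by simp
  then show False using F_Q[OF assms] assms by simp
qed

lemma Q_mono1: "mono_on {0<..<1} (Qf F)"
  unfolding mono_on_def
proof (intro allI impI)
  fix u v :: real assume "u \<in> {0<..<1} \<and> v \<in> {0<..<1} \<and> u \<le> v"
  then have uv: "0 < u" "u < 1" "0 < v" "v < 1" "u \<le> v" by auto
  have "v \<le> F (Qf F v)" by (rule F_Q[OF uv(3,4)])
  then have "u \<le> F (Qf F v)" using uv(5) by simp
  then show "Qf F u \<le> Qf F v" using Q_le[OF uv(1,2)] by simp
qed

lemma Q_mono2: "mono_on (-{0<..<1}) (Qf F)"
proof -
  have "Qf F u = 1" if "u \<in> -{0<..<1}" for u using that unfolding Qf_def by auto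
  then show ?thesis unfolding mono_on_def by simp
qed

lemma Q_meas[measurable]: "Qf F \<in> borel_measurable borel"
proof (rule borel_measurable_piecewise_mono[of "{{0<..<1}, -{0<..<1}}"])
  show "countable {{0<..<1::real}, -{0<..<1}}" by simp
  show "\<And>c. c \<in> {{0<..<1::real}, -{0<..<1}} \<Longrightarrow> c \<in> sets borel" by auto
  show "\<And>c. c \<in> {{0<..<1::real}, -{0<..<1}} \<Longrightarrow> mono_on c (Qf F)" using Q_mono1 Q_mono2 by blast
  show "\<Union> {{0<..<1::real}, -{0<..<1}} = UNIV" by blast
qed

end


lemma interval_meas:
  assumes "l \<le> h" "S \<in> sets lborel" "{l<..<h} \<subseteq> S" "S \<subseteq> {l..h}"
  shows "measure lborel S = h - l"
proof -
  have "emeasure lborel {l<..<h} \<le> emeasure lborel S" by (rule emeasure_mono[OF assms(3,2)])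
  moreover have "emeasure lborel S \<le> emeasure lborel {l..h}" by (rule emeasure_mono[OF assms(4)]) simp
  ultimately have "emeasure lborel S = ennreal (h - l)" using assms(1) by (auto intro: antisym)
  then show ?thesis using assms(1) by (simp add: measure_def)
qed

definition Uni :: "real measure" where "Uni = uniform_measure lborel {0<..<1}"

lemma Uni_prob: "prob_space Uni"
  unfolding Uni_def by (rule prob_space_uniform_measure) auto

lemma Uni_sets[simp, measurable_cong]: "sets Uni = sets borel"
  unfolding Uni_def by simp
lemma Uni_space[simp]: "space Uni = UNIV"
  unfolding Uni_def by simp

lemma Uni_measure: "B \<in> sets borel \<Longrightarrow> measure Uni B = measure lborel ({0<..<1} \<inter> B)"
  unfolding Uni_def by (subst measure_uniform_measure) auto

lemma Uni_emeasure: "B \<in> sets borel \<Longrightarrow> emeasure Uni B = emeasure lborel ({0<..<1} \<inter> B)"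
  unfolding Uni_def by (subst emeasure_uniform_measure) (auto simp: divide_ennreal_def)

definition Pc :: "(real \<Rightarrow> real) \<Rightarrow> (real \<times> real) measure" where
  "Pc F = distr Uni borel (\<lambda>u. (Qf F u, Qf F (1-u)))"

context
  fixes F :: "real \<Rightarrow> real"
  assumes cF: "cdfp F"
begin

lemma g_meas: "(\<lambda>u. (Qf F u, Qf F (1-u))) \<in> measurable Uni borel"
proof -
  have [measurable]: "Qf F \<in> borel_measurable borel" by (rule Q_meas[OF cF])
  show ?thesis by measurable
qed

lemma Pc_prob: "prob_space (Pc F)"
  unfolding Pc_def by (rule prob_space.prob_space_distr[OF Uni_prob g_meas])

lemma Pc_sets: "sets (Pc F) = sets borel"
  unfolding Pc_def by simp

lemma Pc_P2: "Pc F \<in> P2"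
proof -
  have box: "{0<..} \<times> {0<..} \<in> sets (borel :: (real\<times>real) measure)"
    by (intro borel_open open_Times) auto
  have pre: "{0<..<1} \<inter> ((\<lambda>u. (Qf F u, Qf F (1-u))) -` ({0<..} \<times> {0<..}) \<inter> space Uni) = {0<..<1::real}"
    using Q_pos[OF cF] by auto
  have mb: "(\<lambda>u. (Qf F u, Qf F (1-u))) -` ({0<..} \<times> {0<..}) \<inter> space Uni \<in> sets borel"
    using measurable_sets[OF g_meas box] by simp
  have "emeasure (Pc F) ({0<..} \<times> {0<..}) = emeasure Uni ((\<lambda>u. (Qf F u, Qf F (1-u))) -` ({0<..} \<times> {0<..}) \<inter> space Uni)"
    unfolding Pc_def by (rule emeasure_distr[OF g_meas box])
  also have "\<dots> = 1" unfolding Uni_emeasure[OF mb] pre by simp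
  finally show ?thesis unfolding P2_def using Pc_prob Pc_sets by auto
qed

lemma F01: "0 \<le> F x" "F x \<le> 1" using cdfp_01[OF cF] by auto

lemma Pc_meas: assumes A: "A \<in> sets borel"
  shows "measure (Pc F) A = measure lborel ({0<..<1} \<inter> {u. (Qf F u, Qf F (1-u)) \<in> A})"
proof -
  have "measure (Pc F) A = measure Uni ((\<lambda>u. (Qf F u, Qf F (1-u))) -` A \<inter> space Uni)"
    unfolding Pc_def by (rule measure_distr[OF g_meas A])
  also have "(\<lambda>u. (Qf F u, Qf F (1-u))) -` A \<inter> space Uni = {u. (Qf F u, Qf F (1-u)) \<in> A}" by auto
  also have "measure Uni {u. (Qf F u, Qf F (1-u)) \<in> A} = measure lborel ({0<..<1} \<inter> {u. (Qf F u, Qf F (1-u)) \<in> A})"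
  proof (rule Uni_measure)
    show "{u. (Qf F u, Qf F (1-u)) \<in> A} \<in> sets borel"
      using measurable_sets[OF g_meas A] by (simp add: vimage_def)
  qed
  finally show ?thesis .
qed

lemma Pc_m1: "measure (Pc F) {z. fst z \<le> r} = F r"
proof -
  have "{0<..<1} \<inter> {u. (Qf F u, Qf F (1-u)) \<in> {z. fst z \<le> r}} = {0<..<1} \<inter> {..F r}"
    using Q_le[OF cF] by auto
  moreover have "measure lborel ({0<..<1} \<inter> {..F r}) = F r - 0"
    by (rule interval_meas) (use F01(1)[of r] F01(2)[of r] in auto)
  ultimately show ?thesis using Pc_meas[OF meas_fst] by simp
qed

lemma Pc_m2: "measure (Pc F) {z. snd z \<le> r} = F r"
proof -
  have "{0<..<1} \<inter> {u. (Qf F u, Qf F (1-u)) \<in> {z. snd z \<le> r}} = {0<..<1} \<inter> {1 - F r..}"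
  proof -
    have "u \<in> {0<..<1} \<Longrightarrow> Qf F (1-u) \<le> r \<longleftrightarrow> 1 - F r \<le> u" for u
      using Q_le[OF cF, of "1-u" r] by auto
    then show ?thesis by auto
  qed
  moreover have "measure lborel ({0<..<1} \<inter> {1 - F r..}) = 1 - (1 - F r)"
    by (rule interval_meas) (use F01(1)[of r] F01(2)[of r] in auto)
  ultimately show ?thesis using Pc_meas[OF meas_snd] by simp
qed

lemma Pc_m12: "measure (Pc F) {z. fst z \<le> r1 \<and> snd z \<le> r2} = Mq (F r1) (F r2)"
proof -
  have e: "{0<..<1} \<inter> {u. (Qf F u, Qf F (1-u)) \<in> {z. fst z \<le> r1 \<and> snd z \<le> r2}} = {0<..<1} \<inter> {..F r1} \<inter> {1 - F r2..}"
  proof -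
    have "u \<in> {0<..<1} \<Longrightarrow> Qf F (1-u) \<le> r2 \<longleftrightarrow> 1 - F r2 \<le> u" for u
      using Q_le[OF cF, of "1-u" r2] by auto
    moreover have "u \<in> {0<..<1} \<Longrightarrow> Qf F u \<le> r1 \<longleftrightarrow> u \<le> F r1" for u
      using Q_le[OF cF, of u r1] by auto
    ultimately show ?thesis by auto
  qed
  have ms: "{0<..<1} \<inter> {..F r1} \<inter> {1 - F r2..} \<in> sets lborel" by simp
  show ?thesis
  proof (cases "F r1 + F r2 \<ge> 1")
    case True
    have "measure lborel ({0<..<1} \<inter> {..F r1} \<inter> {1 - F r2..}) = F r1 - (1 - F r2)"
      by (rule interval_meas) (use True F01(1)[of r1] F01(2)[of r1] F01(1)[of r2] F01(2)[of r2] in auto)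
    then show ?thesis using Pc_meas[OF meas_both] e True unfolding Mq_def by simp
  next
    case False
    then have "{0<..<1} \<inter> {..F r1} \<inter> {1 - F r2..} = {}" by auto
    then show ?thesis using Pc_meas[OF meas_both] e False unfolding Mq_def by simp
  qed
qed

end


lemma Opt4_pos: "a>0 \<Longrightarrow> b>0 \<Longrightarrow> c>0 \<Longrightarrow> d>0 \<Longrightarrow> Opt4 a b c d > 0"
  unfolding Opt4_def by (simp add: less_max_iff_disj)

lemma upper:
  assumes G: "F \<in> G1_pos"
  shows "R2 \<le> (SUP xy\<in>{0<..} \<times> {0<..}. ereal (thm7_obj F (fst xy) (snd xy)))"
proof -
  have cF: "cdfp F" by (rule G1_elim[OF G])
  define Sp where "Sp = (SUP xy\<in>{0<..} \<times> {0<..}. ereal (thm7_obj F (fst xy) (snd xy)))"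
  have R2le: "R2 \<le> ratio2 (Pc F)" unfolding R2_def by (rule INF_lower[OF Pc_P2[OF cF]])
  have "ratio2 (Pc F) \<le> Sp"
  proof (cases "Sp = \<infinity>")
    case True then show ?thesis by simp
  next
    case False
    have ub: "ereal (thm7_obj F x y) \<le> Sp" if "x>0" "y>0" for x y
      unfolding Sp_def using that by (intro SUP_upper2[of "(x,y)"]) auto
    have "Sp \<noteq> -\<infinity>" using ub[of 1 1] by auto
    then obtain S where S: "Sp = ereal S" using False by (cases Sp) auto
    have Sobj: "thm7_obj F x y \<le> S" if "x>0" "y>0" for x y using ub[OF that] S by simp
    have F0: "\<And>x. 0 \<le> F x" and F1: "\<And>x. F x \<le> 1" using cdfp_01[OF cF] by auto
    have Fs: "\<And>e. e>0 \<Longrightarrow> \<exists>x>0. F x < e" using cdfp_small[OF cF] by blast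
    show ?thesis unfolding ratio2_def S
    proof (rule SUP_least)
      fix T assume "T \<in> {T. pos_matrix T}"
      then have T: "pos_matrix T" by simp
      have pos: "T 1 1 > 0" "T 1 2 > 0" "T 2 1 > 0" "T 2 2 > 0" using T unfolding pos_matrix_def by auto
      have "exp_makespan (Pc F) T = Ec (F (T 1 1 / T 2 1)) (F (T 1 2 / T 2 2)) (T 1 1) (T 1 2) (T 2 1) (T 2 2)"
        unfolding exp_formula[OF Pc_prob[OF cF] Pc_sets[OF cF] T] Pc_m1[OF cF] Pc_m2[OF cF] Pc_m12[OF cF] Ec_Eg ..
      also have "\<dots> \<le> S * Opt4 (T 1 1) (T 1 2) (T 2 1) (T 2 2)"
        by (rule main_bound[of F S]) (use F0 F1 Sobj Fs pos in auto)
      finally have le: "exp_makespan (Pc F) T \<le> S * opt_makespan T" unfolding opt_Opt4[OF T] .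
      have "opt_makespan T > 0" unfolding opt_Opt4[OF T] using Opt4_pos[OF pos] .
      then have "exp_makespan (Pc F) T / opt_makespan T \<le> S" using le by (simp add: divide_le_eq)
      then show "ereal (exp_makespan (Pc F) T / opt_makespan T) \<le> ereal S" by simp
    qed
  qed
  then show ?thesis using R2le unfolding Sp_def by simp
qed


definition mkT :: "real \<Rightarrow> real \<Rightarrow> real \<Rightarrow> real \<Rightarrow> nat \<Rightarrow> nat \<Rightarrow> real" where
  "mkT a b c d = (\<lambda>i j. if i = 1 then (if j = 1 then a else b) else (if j = 1 then c else d))"

lemma mkT_simps[simp]: "mkT a b c d 1 1 = a" "mkT a b c d 1 2 = b" "mkT a b c d 2 1 = c" "mkT a b c d 2 2 = d"
  unfolding mkT_def by auto

lemma mkT_pos: "a>0 \<Longrightarrow> b>0 \<Longrightarrow> c>0 \<Longrightarrow> d>0 \<Longrightarrow> pos_matrix (mkT a b c d)"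
  unfolding pos_matrix_def mkT_def by auto

lemma Ew_nonneg: "0 \<le> p11 \<Longrightarrow> 0 \<le> p22 \<Longrightarrow> 0 \<le> p12 \<Longrightarrow> 0 \<le> p21 \<Longrightarrow> a \<ge> 0 \<Longrightarrow> b \<ge> 0 \<Longrightarrow> c \<ge> 0 \<Longrightarrow> d \<ge> 0
   \<Longrightarrow> Ew p11 p22 p12 p21 a b c d \<ge> 0"
  unfolding Ew_def by (intro add_nonneg_nonneg mult_nonneg_nonneg) (auto simp: le_max_iff_disj)

lemma Ec_nonneg: "0 \<le> q1 \<Longrightarrow> q1 \<le> 1 \<Longrightarrow> 0 \<le> q2 \<Longrightarrow> q2 \<le> 1 \<Longrightarrow> a \<ge> 0 \<Longrightarrow> b \<ge> 0 \<Longrightarrow> c \<ge> 0 \<Longrightarrow> d \<ge> 0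
   \<Longrightarrow> Ec q1 q2 a b c d \<ge> 0"
proof -
  assume h: "0 \<le> q1" "q1 \<le> 1" "0 \<le> q2" "q2 \<le> 1" "a \<ge> 0" "b \<ge> 0" "c \<ge> 0" "d \<ge> 0"
  have p: "0 \<le> 1-q1-q2+Mq q1 q2" "0 \<le> Mq q1 q2" "0 \<le> q2 - Mq q1 q2" "0 \<le> q1 - Mq q1 q2"
    unfolding Mq_def using h by auto
  show ?thesis unfolding Ec_def by (rule Ew_nonneg[OF p h(5-8)])
qed

lemma Eg_ge_Ec:
  assumes "q12 \<ge> Mq q1 q2" "c+d - max b c - max a d + (a+b) \<ge> 0"
  shows "Eg q1 q2 q12 a b c d \<ge> Ec q1 q2 a b c d"
  unfolding Ec_Eg Eg_def using mult_right_mono[OF assms] by simp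

lemma Mq_convex: "Mq ((q1+q1')/2) ((q2+q2')/2) \<le> (Mq q1 q2 + Mq q1' q2')/2"
  unfolding Mq_def by (auto simp: max_def field_simps)

lemma Ec_convex: assumes "y > 0" "u > 0"
  shows "Ec ((q1+q1')/2) ((q2+q2')/2) 1 y u 1 \<le> (Ec q1 q2 1 y u 1 + Ec q1' q2' 1 y u 1)/2"
proof -
  define K where "K = u + 1 - max y u - max 1 1 + (1 + y)"
  have K: "K \<ge> 0" unfolding K_def using assms by (auto simp: max_def)
  have e: "Ec p1 p2 1 y u 1 = (1+y) + p1*(max y u - (1+y)) + p2*(max 1 1 - (1+y)) + Mq p1 p2 * K" for p1 p2
    unfolding Ec_Eg Eg_def K_def by simp
  show ?thesis unfolding e using mult_right_mono[OF Mq_convex K, of q1 q1' q2 q2']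
    by (simp add: algebra_simps add_divide_distrib)
qed

lemma frechet:
  assumes P: "prob_space P" "sets P = sets (borel :: (real\<times>real) measure)"
  shows "measure P {z. fst z \<le> r1 \<and> snd z \<le> r2} \<ge> Mq (measure P {z. fst z \<le> r1}) (measure P {z. snd z \<le> r2})"
proof -
  interpret prob_space P by fact
  define A where "A = {z::real\<times>real. fst z \<le> r1}"
  define B where "B = {z::real\<times>real. snd z \<le> r2}"
  have AB: "A \<in> sets P" "B \<in> sets P" unfolding A_def B_def P(2) by (rule meas_fst meas_snd)+
  have AB': "A \<in> fmeasurable P" "B \<in> fmeasurable P" using AB by (auto simp: fmeasurable_def less_top[symmetric])
  have "measure P (A \<union> B) = measure P A + measure P B - measure P (A \<inter> B)" by (rule measure_Un3[OF AB'])
  moreover have "measure P (A \<union> B) \<le> 1" by (rule prob_le_1)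
  moreover have "A \<inter> B = {z. fst z \<le> r1 \<and> snd z \<le> r2}" unfolding A_def B_def by auto
  ultimately show ?thesis unfolding Mq_def A_def B_def by simp
qed

lemma avg_le_max: "(a::real) \<le> (b+c)/2 \<Longrightarrow> b \<le> b' \<Longrightarrow> c \<le> c' \<Longrightarrow> a \<le> max b' c'"
  by (auto simp: max_def field_simps)

lemma lower:
  assumes PP: "P \<in> P2"
  shows "(INF F\<in>G1_pos. SUP xy\<in>{0<..} \<times> {0<..}. ereal (thm7_obj F (fst xy) (snd xy))) \<le> ratio2 P"
proof -
  have P: "prob_space P" "sets P = sets (borel :: (real\<times>real) measure)" and box: "emeasure P ({0<..} \<times> {0<..}) = 1"
    using PP unfolding P2_def by auto
  interpret prob_space P by fact
  have sp: "space P = UNIV" using sets_eq_imp_space_eq[OF P(2)] by simp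
  define F1 where "F1 = (\<lambda>x. measure P {z. fst z \<le> x})"
  define F2 where "F2 = (\<lambda>x. measure P {z. snd z \<le> x})"
  define F where "F = (\<lambda>x. (F1 x + F2 x)/2)"
  have fm: "fst \<in> borel_measurable P" "snd \<in> borel_measurable P"
    unfolding measurable_cong_sets[OF P(2) refl]
    by (intro borel_measurable_continuous_onI continuous_intros)+
  interpret D1: real_distribution "distr P borel fst" by (rule real_distribution_distr[OF fm(1)])
  interpret D2: real_distribution "distr P borel snd" by (rule real_distribution_distr[OF fm(2)])
  have c1: "F1 = cdf (distr P borel fst)"
    unfolding F1_def cdf_def by (rule ext, subst measure_distr[OF fm(1)]) (auto simp: sp vimage_def)
  have c2: "F2 = cdf (distr P borel snd)"
    unfolding F2_def cdf_def by (rule ext, subst measure_distr[OF fm(2)]) (auto simp: sp vimage_def)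
  have boxs: "{0<..} \<times> {0<..} \<in> sets P" unfolding P(2) by (intro borel_open open_Times) auto
  have cs: "UNIV - {0<..} \<times> {0<..} \<in> sets P" using sets.compl_sets[OF boxs] sp by simp
  have cbox: "measure P (space P - {0<..} \<times> {0<..}) = 0"
    using prob_compl[OF boxs] box by (simp add: measure_def)
  have z1: "F1 x = 0" if "x \<le> 0" for x
  proof -
    have "F1 x \<le> measure P (space P - {0<..} \<times> {0<..})" unfolding F1_def sp
      using that cs by (intro finite_measure_mono) auto
    then show ?thesis using cbox unfolding F1_def by (simp add: antisym)
  qed
  have z2: "F2 x = 0" if "x \<le> 0" for x
  proof -
    have "F2 x \<le> measure P (space P - {0<..} \<times> {0<..})" unfolding F2_def sp
      using that cs by (intro finite_measure_mono) auto
    then show ?thesis using cbox unfolding F2_def by (simp add: antisym)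
  qed
  have cF: "cdfp F" unfolding cdfp_def
  proof (intro conjI allI impI)
    fix x y :: real assume "x \<le> y" then show "F x \<le> F y"
      unfolding F_def c1 c2 using D1.cdf_nondecreasing D2.cdf_nondecreasing by (intro divide_right_mono add_mono) auto
  next
    fix a :: real
    have "((\<lambda>x. (F1 x + F2 x)/2) \<longlongrightarrow> (F1 a + F2 a)/2) (at_right a)"
      using D1.cdf_is_right_cont[of a] D2.cdf_is_right_cont[of a] unfolding c1 c2 continuous_within
      by (intro tendsto_intros) auto
    then show "continuous (at_right a) F" unfolding F_def continuous_within by simp
  next
    fix x :: real assume "x \<le> 0" then show "F x = 0" unfolding F_def using z1 z2 by simp
  next
    have "((\<lambda>x. (F1 x + F2 x)/2) \<longlongrightarrow> (1+1)/2) at_top"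
      unfolding c1 c2 by (intro tendsto_intros D1.cdf_lim_at_top_prob D2.cdf_lim_at_top_prob) auto
    then show "(F \<longlongrightarrow> 1) at_top" unfolding F_def by simp
  qed
  have GF: "F \<in> G1_pos" by (rule G1_intro[OF cF])
  have F1b: "0 \<le> F1 x" "F1 x \<le> 1" for x unfolding F1_def by auto
  have F2b: "0 \<le> F2 x" "F2 x \<le> 1" for x unfolding F2_def by auto
  have "(SUP xy\<in>{0<..} \<times> {0<..}. ereal (thm7_obj F (fst xy) (snd xy))) \<le> ratio2 P"
  proof (rule SUP_least)
    fix xy :: "real \<times> real" assume "xy \<in> {0<..} \<times> {0<..}"
    then obtain x y where xy: "xy = (x,y)" "x > 0" "y > 0" by (cases xy) auto
    define T1 where "T1 = mkT 1 y (1/x) 1"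
    define T2 where "T2 = mkT y 1 1 (1/x)"
    have T1p: "pos_matrix T1" unfolding T1_def mkT_simps using xy by (intro mkT_pos) auto
    have T2p: "pos_matrix T2" unfolding T2_def mkT_simps using xy by (intro mkT_pos) auto
    define E1 where "E1 = exp_makespan P T1"
    define E2 where "E2 = exp_makespan P T2"
    have r1: "T1 1 1 / T1 2 1 = x" "T1 1 2 / T1 2 2 = y" unfolding T1_def mkT_simps using xy by auto
    have r2: "T2 1 1 / T2 2 1 = y" "T2 1 2 / T2 2 2 = x" unfolding T2_def mkT_simps using xy by auto
    have ix: "1/x > 0" using xy by simp
    have ix1: "0 < 1/x + 1" "0 < 1 + 1/x" using ix by linarith+
    have E1e: "E1 = Eg (F1 x) (F2 y) (measure P {z. fst z \<le> x \<and> snd z \<le> y}) 1 y (1/x) 1"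
      unfolding E1_def exp_formula[OF P T1p] r1 unfolding T1_def mkT_simps F1_def F2_def by simp
    have E2e: "E2 = Eg (F1 y) (F2 x) (measure P {z. fst z \<le> y \<and> snd z \<le> x}) y 1 1 (1/x)"
      unfolding E2_def exp_formula[OF P T2p] r2 unfolding T2_def mkT_simps F1_def F2_def by simp
    have K: "1/x + 1 - max y (1/x) - max 1 1 + (1 + y) \<ge> 0" "1 + 1/x - max 1 1 - max y (1/x) + (y + 1) \<ge> 0"
      using xy by (auto simp: max_def)
    have E1g: "E1 \<ge> Ec (F1 x) (F2 y) 1 y (1/x) 1"
      unfolding E1e using frechet[OF P, of x y] K(1) unfolding F1_def F2_def by (intro Eg_ge_Ec) auto
    have E2g: "E2 \<ge> Ec (F2 x) (F1 y) 1 y (1/x) 1"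
    proof -
      have "E2 \<ge> Ec (F1 y) (F2 x) y 1 1 (1/x)"
        unfolding E2e using frechet[OF P, of y x] K(2) unfolding F1_def F2_def by (intro Eg_ge_Ec) auto
      then show ?thesis using Ec_swap by metis
    qed
    have "thm7_obj F x y = Ec (F x) (F y) 1 y (1/x) 1" by (rule obj_Ec[OF xy(2)])
    also have "\<dots> = Ec ((F1 x + F2 x)/2) ((F2 y + F1 y)/2) 1 y (1/x) 1" unfolding F_def by (simp add: add.commute)
    also have "\<dots> \<le> (Ec (F1 x) (F2 y) 1 y (1/x) 1 + Ec (F2 x) (F1 y) 1 y (1/x) 1)/2"
      by (rule Ec_convex) (use xy in auto)
    also have "\<dots> \<le> (E1 + E2)/2" using E1g E2g by simp
    finally have objle: "thm7_obj F x y \<le> (E1 + E2)/2" .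
    have E1n: "E1 \<ge> 0" using E1g Ec_nonneg[of "F1 x" "F2 y" 1 y "1/x" 1] F1b F2b xy by force
    have E2n: "E2 \<ge> 0" using E2g Ec_nonneg[of "F2 x" "F1 y" 1 y "1/x" 1] F1b F2b xy by force
    have o1: "opt_makespan T1 > 0" "opt_makespan T1 \<le> 1"
      unfolding opt_Opt4[OF T1p] unfolding T1_def mkT_simps using xy ix ix1 by (auto simp: Opt4_def less_max_iff_disj)
    have o2: "opt_makespan T2 > 0" "opt_makespan T2 \<le> 1"
      unfolding opt_Opt4[OF T2p] unfolding T2_def mkT_simps using xy ix ix1 by (auto simp: Opt4_def less_max_iff_disj)
    have d1: "E1 \<le> E1 / opt_makespan T1" using o1 E1n by (simp add: le_divide_eq mult_left_le)
    have d2: "E2 \<le> E2 / opt_makespan T2" using o2 E2n by (simp add: le_divide_eq mult_left_le)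
    have R1: "ereal (E1 / opt_makespan T1) \<le> ratio2 P" unfolding ratio2_def E1_def
      using T1p by (intro SUP_upper) auto
    have R2': "ereal (E2 / opt_makespan T2) \<le> ratio2 P" unfolding ratio2_def E2_def
      using T2p by (intro SUP_upper) auto
    have Mx: "thm7_obj F x y \<le> max (E1 / opt_makespan T1) (E2 / opt_makespan T2)"
      by (rule avg_le_max[OF objle d1 d2])
    show "ereal (thm7_obj F (fst xy) (snd xy)) \<le> ratio2 P"
    proof (cases "E1 / opt_makespan T1 \<le> E2 / opt_makespan T2")
      case True
      then have "ereal (thm7_obj F x y) \<le> ereal (E2 / opt_makespan T2)" using Mx by (simp add: max_def)
      then have "ereal (thm7_obj F x y) \<le> ratio2 P" using R2' by (rule order_trans)
      then show ?thesis using xy(1) by simp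
    next
      case False
      then have "ereal (thm7_obj F x y) \<le> ereal (E1 / opt_makespan T1)" using Mx by (simp add: max_def)
      then have "ereal (thm7_obj F x y) \<le> ratio2 P" using R1 by (rule order_trans)
      then show ?thesis using xy(1) by simp
    qed
  qed
  then show ?thesis by (rule INF_lower2[OF GF])
qed

theorem theorem7:
  shows "R2 = (INF F\<in>G1_pos. SUP xy\<in>{0<..} \<times> {0<..}. ereal (thm7_obj F (fst xy) (snd xy)))"
proof (rule antisym)
  show "R2 \<le> (INF F\<in>G1_pos. SUP xy\<in>{0<..} \<times> {0<..}. ereal (thm7_obj F (fst xy) (snd xy)))"
    by (rule INF_greatest) (rule upper)
  show "(INF F\<in>G1_pos. SUP xy\<in>{0<..} \<times> {0<..}. ereal (thm7_obj F (fst xy) (snd xy))) \<le> R2"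
    unfolding R2_def by (rule INF_greatest) (rule lower)
qed


end
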